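(* Let $\mu$ be a positive Borel measure on $\mathbb{C}$ with finite moments $m_{j,k}=\int_{\mathbb{C}}z^j\overline z^kd\mu(z)$, and assume the moment matrix is tri-diagonal, i.e. $m_{j,k}=0$ whenever $|j-k|\ge2$. Let $\widehat m_{j,k}=\operatorname{Re}m_{j,k}$, $g_{j,k}=2(\widehat m_{j+1,k}-\widehat m_{j,k+1})$, $G_k=(g_{i,j})_{i,j=0}^{2k-1}$, $\Delta_{-1}=1$, $\Delta_k=\mathrm{Pf}(G_{k+1})$ for $k\ge0$ (assumed nonzero), and $\mathcal Z_j=\frac12\frac{\Delta_{j-1}}{\Delta_{j-2}}$ for $j\ge1$. Then monic skew-orthogonal polynomials with respect to the skew-product $\langle f,g\rangle_s=\int_{\mathbb{C}}(f(z)\overline{g(z)}-g(z)\overline{f(z)})(z-\overline z)d\mu(z)$ are given by $q_{2k}(z)=\sum_{j=0}^{2k}\alpha_{2k,j}z^j$, $q_{2k+1}(z)=\sum_{j=0}^{2k+1}\beta_{2k+1,j}z^j$ with $\alpha_{2k,2k}=1$, $\beta_{2k+1,2k+1}=1$, $\beta_{2k+1,2k}=\beta_{2k+1,2k-1}=0$, and the remaining coefficients determined by, for $j=1,2,\dots,k$ (with the convention $\alpha_{2k,2k+1}=0$): $$\mathcal Z_j\alpha_{2k,2j-1}=-\widehat m_{2j-1,2j}\alpha_{2k,2j},\qquad\mathcal Z_j\alpha_{2k,2j-2}=\widehat m_{2j,2j+1}\alpha_{2k,2j+1}+\widehat m_{2j,2j}\alpha_{2k,2j},$$ $$\mathcal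 Z_j\beta_{2k+1,2j-1}=-\widehat m_{2j-1,2j}\beta_{2k+1,2j},\qquad\mathcal Z_j\beta_{2k+1,2j-2}=\widehat m_{2j,2j+1}\beta_{2k+1,2j+1}+\widehat m_{2j,2j}\beta_{2k+1,2j}.$$
   Context: Polynomials $(q_k)_{k\ge0}$ with $\deg q_k=k$ are skew-orthogonal if $\langle q_{2k},q_{2\ell}\rangle_s=\langle q_{2k+1},q_{2\ell+1}\rangle_s=0$ and $\langle q_{2k},q_{2\ell+1}\rangle_s=-\langle q_{2\ell+1},q_{2k}\rangle_s=r_k\delta_{k,\ell}$; monic means leading coefficient $1$. $\mathrm{Pf}$ denotes the Pfaffian of an antisymmetric matrix. *)

theory Defs
  imports "HOL-Analysis.Analysis" "HOL-Computational_Algebra.Polynomial"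
begin

definition moment :: "complex measure \<Rightarrow> nat \<Rightarrow> nat \<Rightarrow> complex" where
  "moment M j k = (LINT z|M. z ^ j * cnj z ^ k)"

definition mhat :: "complex measure \<Rightarrow> nat \<Rightarrow> nat \<Rightarrow> real" where
  "mhat M j k = Re (moment M j k)"

definition gmat :: "complex measure \<Rightarrow> nat \<Rightarrow> nat \<Rightarrow> real" where
  "gmat M j k = 2 * (mhat M (j + 1) k - mhat M j (k + 1))"

definition pfaffian :: "nat \<Rightarrow> (nat \<Rightarrow> nat \<Rightarrow> real) \<Rightarrow> real" where
  "pfaffian n A =
     (\<Sum>\<sigma> | \<sigma> permutes {..<2*n}. of_int (sign \<sigma>) * (\<Prod>i<n. A (\<sigma> (2*i)) (\<sigma> (2*i+1))))
     / (2 ^ n * fact n)"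

definition Delta :: "complex measure \<Rightarrow> int \<Rightarrow> real" where
  "Delta M k = (if k = -1 then 1 else pfaffian (nat k + 1) (gmat M))"

definition Zc :: "complex measure \<Rightarrow> nat \<Rightarrow> real" where
  "Zc M j = (1/2) * (Delta M (int j - 1) / Delta M (int j - 2))"

definition skew :: "complex measure \<Rightarrow> (complex \<Rightarrow> complex) \<Rightarrow> (complex \<Rightarrow> complex) \<Rightarrow> complex" where
  "skew M f g = (LINT z|M. (f z * cnj (g z) - g z * cnj (f z)) * (z - cnj z))"

end

theory Submission
  imports Defs
begin


definition skipn :: "nat \<Rightarrow> nat \<Rightarrow> nat" where
  "skipn j a = (if a < j then a else Suc a)"

definition Tpf :: "nat \<Rightarrow> (nat \<Rightarrow> nat \<Rightarrow> real) \<Rightarrow> (nat \<Rightarrow> nat) \<Rightarrow> real" where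
  "Tpf n A \<sigma> = of_int (sign \<sigma>) * (\<Prod>i<n. A (\<sigma> (2*i)) (\<sigma> (2*i+1)))"

lemma pfaffian_Tpf: "pfaffian n A = (\<Sum>\<sigma> | \<sigma> permutes {..<2*n}. Tpf n A \<sigma>) / (2 ^ n * fact n)"
  unfolding pfaffian_def Tpf_def by simp

lemma pfaffian_cong:
  assumes "\<And>a b. a < 2*n \<Longrightarrow> b < 2*n \<Longrightarrow> A a b = B a b"
  shows "pfaffian n A = pfaffian n B"
proof -
  have "Tpf n A \<sigma> = Tpf n B \<sigma>" if "\<sigma> permutes {..<2*n}" for \<sigma>
  proof -
    have "\<sigma> x < 2*n" if "x < 2*n" for x using permutes_in_image[OF \<open>\<sigma> permutes _\<close>] that by auto
    then show ?thesis unfolding Tpf_def by (intro arg_cong2[where f="(*)"] refl prod.cong) (auto intro!: assms)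
  qed
  then show ?thesis unfolding pfaffian_Tpf by (intro arg_cong2[where f="(/)"] sum.cong) auto
qed

lemma pfaffian_0: "pfaffian 0 A = 1"
  unfolding pfaffian_def by simp

definition cyc :: "nat \<Rightarrow> nat \<Rightarrow> nat \<Rightarrow> nat" where
  "cyc k j a = (if a < j then a else if a < k then Suc a else if a = k then j else a)"

lemma cyc_props: "j \<le> k \<Longrightarrow> cyc k j permutes {..k} \<and> sign (cyc k j) = (-1)^(k-j)"
proof (induction "k - j" arbitrary: j)
  case 0
  then have "j = k" by simp
  then have "cyc k j = id" by (auto simp: cyc_def fun_eq_iff)
  then show ?case using \<open>j = k\<close> by (metis permutes_id sign_id diff_self_eq_0 power_0)
next
  case (Suc d)
  then have jk: "j < k" by simp
  have IH: "cyc k (Suc j) permutes {..k} \<and> sign (cyc k (Suc j)) = (-1)^(k - Suc j)"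
    using Suc by simp
  have eq: "cyc k j = Transposition.transpose j (Suc j) \<circ> cyc k (Suc j)"
    using jk by (auto simp: cyc_def fun_eq_iff Transposition.transpose_def)
  have p1: "Transposition.transpose j (Suc j) permutes {..k}" using jk by (intro permutes_swap_id) auto
  have "sign (cyc k j) = sign (Transposition.transpose j (Suc j)) * sign (cyc k (Suc j))"
    unfolding eq by (rule sign_compose) (auto intro: permutation_swap_id permutes_imp_permutation[OF _ conjunct1[OF IH]])
  also have "\<dots> = (-1)^(k-j)" proof -
    have "k - j = Suc (k - Suc j)" using jk by arith
    then show ?thesis using IH jk by (simp add: sign_swap_id)
  qed
  finally show ?case using eq permutes_compose[OF conjunct1[OF IH] p1] by simp
qed

lemma Tpf_swap_pair:
  assumes perm: "\<sigma> permutes {..<2*n}" and i: "i < n" and anti: "\<And>a b. A b a = - A a b"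
  shows "Tpf n A (\<sigma> \<circ> Transposition.transpose (2*i) (2*i+1)) = Tpf n A \<sigma>"
proof -
  let ?t = "Transposition.transpose (2*i) (2*i+1)"
  have sg: "sign (\<sigma> \<circ> ?t) = - sign \<sigma>"
    by (subst sign_compose) (auto intro: permutation_swap_id permutes_imp_permutation[OF _ perm] simp: sign_swap_id)
  let ?F = "\<lambda>x. A (\<sigma> (2*x)) (\<sigma> (2*x+1))"
  let ?G = "\<lambda>x. A ((\<sigma> \<circ> ?t) (2*x)) ((\<sigma> \<circ> ?t) (2*x+1))"
  have "(\<Prod>x<n. ?G x) = ?G i * (\<Prod>x\<in>{..<n}-{i}. ?G x)"
    using i by (subst prod.remove[of _ i]) auto
  also have "(\<Prod>x\<in>{..<n}-{i}. ?G x) = (\<Prod>x\<in>{..<n}-{i}. ?F x)"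
    by (intro prod.cong refl) (auto simp: Transposition.transpose_def)
  also have "?G i = - ?F i" by (simp add: Transposition.transpose_def anti[of "\<sigma> (2*i)"])
  finally have "(\<Prod>x<n. ?G x) = - (?F i * (\<Prod>x\<in>{..<n}-{i}. ?F x))" by simp
  also have "?F i * (\<Prod>x\<in>{..<n}-{i}. ?F x) = (\<Prod>x<n. ?F x)"
    using i by (subst prod.remove[of _ i]) auto
  finally show ?thesis unfolding Tpf_def sg by simp
qed

lemma pairswap_eval:
  fixes i l x :: nat shows
  "(Transposition.transpose (2*i) (2*l) \<circ> Transposition.transpose (2*i+1) (2*l+1)) (2*x) = 2 * Transposition.transpose i l x"
  "(Transposition.transpose (2*i) (2*l) \<circ> Transposition.transpose (2*i+1) (2*l+1)) (2*x+1) = 2 * Transposition.transpose i l x + 1"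
  by (auto simp: Transposition.transpose_def; presburger)+

lemma Tpf_pairswap:
  assumes perm: "\<sigma> permutes {..<2*n}" and i: "i < n" and l: "l < n"
  shows "Tpf n A (\<sigma> \<circ> (Transposition.transpose (2*i) (2*l) \<circ> Transposition.transpose (2*i+1) (2*l+1))) = Tpf n A \<sigma>"
proof -
  let ?p = "Transposition.transpose (2*i) (2*l) \<circ> Transposition.transpose (2*i+1) (2*l+1)"
  have "sign ?p = 1"
    by (subst sign_compose) (auto intro: permutation_swap_id simp: sign_swap_id)
  then have sg: "sign (\<sigma> \<circ> ?p) = sign \<sigma>"
    by (subst sign_compose) (auto intro: permutation_swap_id permutation_compose permutes_imp_permutation[OF _ perm])
  let ?F = "\<lambda>x. A (\<sigma> (2*x)) (\<sigma> (2*x+1))"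
  have sw: "Transposition.transpose i l permutes {..<n}" using i l by (intro permutes_swap_id) auto
  have "(\<Prod>x<n. A ((\<sigma> \<circ> ?p) (2*x)) ((\<sigma> \<circ> ?p) (2*x+1))) = (\<Prod>x<n. (?F \<circ> Transposition.transpose i l) x)"
    by (intro prod.cong refl) (simp only: o_apply pairswap_eval[unfolded o_apply])
  also have "\<dots> = (\<Prod>x<n. ?F x)" using prod.permute[OF sw, symmetric] by simp
  finally show ?thesis unfolding Tpf_def sg by simp
qed

lemma Tpf_invar:
  assumes perm: "\<sigma> permutes {..<2*Suc n}" and p: "p < 2*Suc n" and anti: "\<And>a b. A b a = - A a b"
  defines "\<tau> \<equiv> (if even p then Transposition.transpose (2*(p div 2)) (2*(p div 2)+1) \<circ>
      (Transposition.transpose (2*(p div 2)) (2*n) \<circ> Transposition.transpose (2*(p div 2)+1) (2*n+1))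
     else (Transposition.transpose (2*(p div 2)) (2*n) \<circ> Transposition.transpose (2*(p div 2)+1) (2*n+1)))"
  shows "\<tau> permutes {..<2*Suc n}" "\<tau> (2*n+1) = p" "Tpf (Suc n) A (\<sigma> \<circ> \<tau>) = Tpf (Suc n) A \<sigma>"
proof -
  let ?i = "p div 2"
  have i: "?i < Suc n" using p by simp
  let ?ps = "Transposition.transpose (2*?i) (2*n) \<circ> Transposition.transpose (2*?i+1) (2*n+1)"
  let ?t = "Transposition.transpose (2*?i) (2*?i+1)"
  have ps: "?ps permutes {..<2*Suc n}" using i
    by (intro permutes_compose permutes_swap_id) auto
  have t: "?t permutes {..<2*Suc n}" using i
    by (intro permutes_swap_id) auto
  show "\<tau> permutes {..<2*Suc n}" unfolding \<tau>_def using ps t by (auto intro: permutes_compose)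
  have e1: "?ps (2*n+1) = 2*?i+1"
    by (simp add: Transposition.transpose_def)
  show "\<tau> (2*n+1) = p"
  proof (cases "even p")
    case True
    then have "?t (2*?i+1) = p" by (simp add: Transposition.transpose_def)
    then show ?thesis unfolding \<tau>_def using True e1 by simp
  next
    case False
    then show ?thesis unfolding \<tau>_def using e1 by simp
  qed
  have sp: "\<sigma> \<circ> ?t permutes {..<2*Suc n}" using perm t by (intro permutes_compose)
  have "Tpf (Suc n) A (\<sigma> \<circ> ?ps) = Tpf (Suc n) A \<sigma>"
    using Tpf_pairswap[OF perm i, of n] by simp
  moreover have "Tpf (Suc n) A (\<sigma> \<circ> (?t \<circ> ?ps)) = Tpf (Suc n) A \<sigma>"
    using Tpf_pairswap[OF sp i, of n] Tpf_swap_pair[OF perm i anti] by (simp add: o_assoc)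
  ultimately show "Tpf (Suc n) A (\<sigma> \<circ> \<tau>) = Tpf (Suc n) A \<sigma>"
    unfolding \<tau>_def by (cases "even p") (simp only: if_True if_False)+
qed

lemma step1_p:
  assumes p: "p < 2*Suc n" and anti: "\<And>a b. A b a = - A a b"
  shows "(\<Sum>\<sigma> | \<sigma> permutes {..<2*Suc n} \<and> \<sigma> p = 2*n+1. Tpf (Suc n) A \<sigma>)
       = (\<Sum>\<sigma> | \<sigma> permutes {..<2*Suc n} \<and> \<sigma> (2*n+1) = 2*n+1. Tpf (Suc n) A \<sigma>)"
proof -
  obtain \<tau> where tp: "\<tau> permutes {..<2*Suc n}" and tm: "\<tau> (2*n+1) = p"
    and ti: "\<And>\<sigma>. \<sigma> permutes {..<2*Suc n} \<Longrightarrow> Tpf (Suc n) A (\<sigma> \<circ> \<tau>) = Tpf (Suc n) A \<sigma>"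
    using Tpf_invar(1,2)[of id n p A, OF permutes_id p anti] Tpf_invar(3)[of _ n p A, OF _ p anti] by blast
  have itp: "inv \<tau> permutes {..<2*Suc n}" using permutes_inv[OF tp] .
  have itm: "inv \<tau> p = 2*n+1" using permutes_inv_eq[OF tp] tm by simp
  show ?thesis
  proof (rule sum.reindex_bij_witness[where j="\<lambda>\<sigma>. \<sigma> \<circ> \<tau>" and i="\<lambda>\<sigma>. \<sigma> \<circ> inv \<tau>"])
    fix a assume "a \<in> {\<sigma>. \<sigma> permutes {..<2*Suc n} \<and> \<sigma> p = 2*n+1}"
    then have a: "a permutes {..<2*Suc n}" "a p = 2*n+1" by auto
    show "a \<circ> \<tau> \<circ> inv \<tau> = a" using permutes_inv_o(1)[OF tp] by (simp add: o_assoc[symmetric])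
    show "a \<circ> \<tau> \<in> {\<sigma>. \<sigma> permutes {..<2*Suc n} \<and> \<sigma> (2*n+1) = 2*n+1}"
      using a tm permutes_compose[OF tp a(1)] by simp
    show "Tpf (Suc n) A (a \<circ> \<tau>) = Tpf (Suc n) A a" using ti[OF a(1)] .
  next
    fix b assume "b \<in> {\<sigma>. \<sigma> permutes {..<2*Suc n} \<and> \<sigma> (2*n+1) = 2*n+1}"
    then have b: "b permutes {..<2*Suc n}" "b (2*n+1) = 2*n+1" by auto
    show "b \<circ> inv \<tau> \<circ> \<tau> = b" using permutes_inv_o(2)[OF tp] by (simp add: o_assoc[symmetric])
    show "b \<circ> inv \<tau> \<in> {\<sigma>. \<sigma> permutes {..<2*Suc n} \<and> \<sigma> p = 2*n+1}"
      using b itm permutes_compose[OF itp b(1)] by simp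
  qed
qed

lemma step1:
  assumes anti: "\<And>a b. A b a = - A a b"
  shows "(\<Sum>\<sigma> | \<sigma> permutes {..<2*Suc n}. Tpf (Suc n) A \<sigma>)
       = of_nat (2*Suc n) * (\<Sum>\<sigma> | \<sigma> permutes {..<2*Suc n} \<and> \<sigma> (2*n+1) = 2*n+1. Tpf (Suc n) A \<sigma>)"
proof -
  let ?S = "{\<sigma>. \<sigma> permutes {..<2*Suc n}}"
  let ?m = "2*n+1"
  have fin: "finite ?S" by (rule finite_permutations) simp
  have "(\<Sum>\<sigma>\<in>?S. Tpf (Suc n) A \<sigma>) = (\<Sum>\<sigma>\<in>?S. \<Sum>p<2*Suc n. if \<sigma> p = ?m then Tpf (Suc n) A \<sigma> else 0)"
  proof (rule sum.cong[OF refl])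
    fix \<sigma> assume "\<sigma> \<in> ?S"
    then have sp: "\<sigma> permutes {..<2*Suc n}" by simp
    have "(\<Sum>p<2*Suc n. if \<sigma> p = ?m then Tpf (Suc n) A \<sigma> else 0)
        = (\<Sum>p<2*Suc n. if inv \<sigma> ?m = p then Tpf (Suc n) A \<sigma> else 0)"
      using permutes_inv_eq[OF sp] by (intro sum.cong) auto
    also have "\<dots> = Tpf (Suc n) A \<sigma>"
      using permutes_in_image[OF permutes_inv[OF sp], of ?m] by simp
    finally show "Tpf (Suc n) A \<sigma> = (\<Sum>p<2*Suc n. if \<sigma> p = ?m then Tpf (Suc n) A \<sigma> else 0)" by simp
  qed
  also have "\<dots> = (\<Sum>p<2*Suc n. \<Sum>\<sigma>\<in>?S. if \<sigma> p = ?m then Tpf (Suc n) A \<sigma> else 0)"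
    by (rule sum.swap)
  also have "\<dots> = (\<Sum>p<2*Suc n. \<Sum>\<sigma> | \<sigma> permutes {..<2*Suc n} \<and> \<sigma> p = ?m. Tpf (Suc n) A \<sigma>)"
  proof (rule sum.cong[OF refl])
    fix p
    have "{\<sigma>. \<sigma> permutes {..<2*Suc n} \<and> \<sigma> p = ?m} = {\<sigma>\<in>?S. \<sigma> p = ?m}" by simp
    then show "(\<Sum>\<sigma>\<in>?S. if \<sigma> p = ?m then Tpf (Suc n) A \<sigma> else 0) = (\<Sum>\<sigma> | \<sigma> permutes {..<2*Suc n} \<and> \<sigma> p = ?m. Tpf (Suc n) A \<sigma>)"
      using sum.inter_filter[OF fin, of "Tpf (Suc n) A" "\<lambda>\<sigma>. \<sigma> p = ?m"] by simp
  qed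
  also have "\<dots> = (\<Sum>p<2*Suc n. \<Sum>\<sigma> | \<sigma> permutes {..<2*Suc n} \<and> \<sigma> ?m = ?m. Tpf (Suc n) A \<sigma>)"
    by (intro sum.cong refl step1_p anti) simp
  finally show ?thesis by simp
qed

definition emb :: "nat \<Rightarrow> nat \<Rightarrow> (nat \<Rightarrow> nat) \<Rightarrow> nat \<Rightarrow> nat" where
  "emb n j \<rho> a = (if a < 2*n then skipn j (\<rho> a) else if a = 2*n then j else a)"

definition unsk :: "nat \<Rightarrow> nat \<Rightarrow> nat" where
  "unsk j b = (if b < j then b else b - 1)"

definition ext :: "nat \<Rightarrow> nat \<Rightarrow> (nat \<Rightarrow> nat) \<Rightarrow> nat \<Rightarrow> nat" where
  "ext n j \<sigma> a = (if a < 2*n then unsk j (\<sigma> a) else a)"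

lemma emb_cyc:
  assumes "j \<le> 2*n" "\<And>a. a < 2*n \<Longrightarrow> \<rho> a < 2*n" "\<And>a. a \<ge> 2*n \<Longrightarrow> \<rho> a = a"
  shows "emb n j \<rho> = cyc (2*n) j \<circ> \<rho>"
proof
  fix a show "emb n j \<rho> a = (cyc (2*n) j \<circ> \<rho>) a"
  proof (cases "a < 2*n")
    case True
    then have "\<rho> a < 2*n" by (rule assms(2))
    then show ?thesis using True by (simp add: emb_def cyc_def skipn_def)
  next
    case False
    then have "\<rho> a = a" using assms(3) by simp
    then show ?thesis using False assms(1) by (simp add: emb_def cyc_def)
  qed
qed

lemma minus1_pow_diff: "j \<le> 2*n \<Longrightarrow> (-1::int)^(2*n-j) = (-1)^j"
proof -
  assume "j \<le> 2*n"
  then have "even (2*n-j) \<longleftrightarrow> even j" by presburger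
  then show ?thesis by (simp add: minus_one_power_iff)
qed

lemma step2_j:
  assumes j: "j < 2*n+1"
  shows "(\<Sum>\<sigma> | \<sigma> permutes {..<2*Suc n} \<and> \<sigma> (2*n+1) = 2*n+1 \<and> \<sigma> (2*n) = j. Tpf (Suc n) A \<sigma>)
    = (-1)^j * A j (2*n+1) * (\<Sum>\<rho> | \<rho> permutes {..<2*n}. Tpf n (\<lambda>a b. A (skipn j a) (skipn j b)) \<rho>)"
proof -
  let ?c = "cyc (2*n) j"
  have cp0: "?c permutes {..2*n}" and cs: "sign ?c = (-1)^(2*n-j)" using cyc_props[of j "2*n"] j by auto
  have cp: "?c permutes {..<2*Suc n}" by (rule permutes_subset[OF cp0]) auto
  have "(\<Sum>\<rho> | \<rho> permutes {..<2*n}. (-1)^j * A j (2*n+1) * Tpf n (\<lambda>a b. A (skipn j a) (skipn j b)) \<rho>)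
     = (\<Sum>\<sigma> | \<sigma> permutes {..<2*Suc n} \<and> \<sigma> (2*n+1) = 2*n+1 \<and> \<sigma> (2*n) = j. Tpf (Suc n) A \<sigma>)"
  proof (rule sum.reindex_bij_witness[where j="emb n j" and i="ext n j"])
    fix \<rho> assume "\<rho> \<in> {\<rho>. \<rho> permutes {..<2*n}}"
    then have rp: "\<rho> permutes {..<2*n}" by simp
    have r1: "\<rho> a < 2*n" if "a < 2*n" for a using permutes_in_image[OF rp] that by simp
    have r2: "\<rho> a = a" if "a \<ge> 2*n" for a using permutes_not_in[OF rp] that by simp
    show "ext n j (emb n j \<rho>) = \<rho>"
    proof
      fix a show "ext n j (emb n j \<rho>) a = \<rho> a"
        using r2[of a] by (auto simp: ext_def emb_def unsk_def skipn_def)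
    qed
    have e: "emb n j \<rho> = ?c \<circ> \<rho>" using emb_cyc[of j n \<rho>] j r1 r2 by simp
    have rp': "\<rho> permutes {..<2*Suc n}" by (rule permutes_subset[OF rp]) auto
    show "emb n j \<rho> \<in> {\<sigma>. \<sigma> permutes {..<2*Suc n} \<and> \<sigma> (2*n+1) = 2*n+1 \<and> \<sigma> (2*n) = j}"
    proof -
      have "emb n j \<rho> permutes {..<2*Suc n}" using permutes_compose[OF rp' cp] e by simp
      moreover have "emb n j \<rho> (2*n+1) = 2*n+1" "emb n j \<rho> (2*n) = j" by (simp_all add: emb_def)
      ultimately show ?thesis by simp
    qed
    have sg: "sign (emb n j \<rho>) = (-1)^j * sign \<rho>"
      unfolding e using j
      by (subst sign_compose) (auto intro: permutes_imp_permutation[OF _ cp] permutes_imp_permutation[OF _ rp] simp: cs minus1_pow_diff)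
    have pr: "(\<Prod>i<Suc n. A (emb n j \<rho> (2*i)) (emb n j \<rho> (2*i+1)))
        = (\<Prod>i<n. A (skipn j (\<rho> (2*i))) (skipn j (\<rho> (2*i+1)))) * A j (2*n+1)"
      by (simp add: emb_def)
    show "Tpf (Suc n) A (emb n j \<rho>) = (-1)^j * A j (2*n+1) * Tpf n (\<lambda>a b. A (skipn j a) (skipn j b)) \<rho>"
      unfolding Tpf_def sg pr by simp
  next
    fix \<sigma> assume "\<sigma> \<in> {\<sigma>. \<sigma> permutes {..<2*Suc n} \<and> \<sigma> (2*n+1) = 2*n+1 \<and> \<sigma> (2*n) = j}"
    then have sp: "\<sigma> permutes {..<2*Suc n}" and sm: "\<sigma> (2*n+1) = 2*n+1" and sj: "\<sigma> (2*n) = j" by auto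
    have s1: "\<sigma> a \<le> 2*n \<and> \<sigma> a \<noteq> j" if "a < 2*n" for a
    proof -
      have "\<sigma> a < 2*Suc n" using permutes_in_image[OF sp] that by simp
      moreover have "\<sigma> a \<noteq> \<sigma> (2*n+1)" "\<sigma> a \<noteq> \<sigma> (2*n)"
        using inj_eq[OF permutes_inj[OF sp]] that by simp_all
      ultimately show ?thesis using sm sj by auto
    qed
    have s2: "\<sigma> a = a" if "a > 2*n+1" for a using permutes_not_in[OF sp] that by simp
    show ee: "emb n j (ext n j \<sigma>) = \<sigma>"
    proof
      fix a show "emb n j (ext n j \<sigma>) a = \<sigma> a"
      proof -
        consider "a < 2*n" | "a = 2*n" | "a = 2*n+1" | "a > 2*n+1" by linarith
        then show ?thesis
        proof cases
          case 1
          then have "\<sigma> a \<le> 2*n" "\<sigma> a \<noteq> j" using s1 by auto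
          then show ?thesis using 1 by (simp add: ext_def emb_def unsk_def skipn_def) linarith
        next
          case 2 then show ?thesis using sj by (simp add: ext_def emb_def)
        next
          case 3 then show ?thesis using sm by (simp add: ext_def emb_def)
        next
          case 4 then show ?thesis using s2[OF 4] by (simp add: ext_def emb_def)
        qed
      qed
    qed
    have x1: "ext n j \<sigma> a < 2*n" if "a < 2*n" for a
      using s1[of a] that j by (auto simp: ext_def unsk_def)
    have x2: "ext n j \<sigma> a = a" if "a \<ge> 2*n" for a using that by (simp add: ext_def)
    have "?c \<circ> ext n j \<sigma> = \<sigma>" using emb_cyc[of j n "ext n j \<sigma>"] j x1 x2 ee by simp
    then have "inv ?c \<circ> \<sigma> = ext n j \<sigma>"
      using permutes_inv_o(2)[OF cp] by (metis comp_assoc id_comp)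
    moreover have "inv ?c \<circ> \<sigma> permutes {..<2*Suc n}" by (rule permutes_compose[OF sp permutes_inv[OF cp]])
    ultimately have "ext n j \<sigma> permutes {..<2*Suc n}" by simp
    then have "ext n j \<sigma> permutes {..<2*n}" by (rule permutes_superset) (simp add: x2)
    then show "ext n j \<sigma> \<in> {\<rho>. \<rho> permutes {..<2*n}}" by simp
  qed
  then show ?thesis by (simp add: sum_distrib_left)
qed

lemma step2:
  "(\<Sum>\<sigma> | \<sigma> permutes {..<2*Suc n} \<and> \<sigma> (2*n+1) = 2*n+1. Tpf (Suc n) A \<sigma>)
    = (\<Sum>j<2*n+1. (-1)^j * A j (2*n+1) * (\<Sum>\<rho> | \<rho> permutes {..<2*n}. Tpf n (\<lambda>a b. A (skipn j a) (skipn j b)) \<rho>))"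
proof -
  let ?F = "{\<sigma>. \<sigma> permutes {..<2*Suc n} \<and> \<sigma> (2*n+1) = 2*n+1}"
  have fin: "finite ?F" by (rule finite_subset[OF _ finite_permutations[of "{..<2*Suc n}"]]) auto
  have "(\<Sum>\<sigma>\<in>?F. Tpf (Suc n) A \<sigma>) = (\<Sum>\<sigma>\<in>?F. \<Sum>j<2*n+1. if \<sigma> (2*n) = j then Tpf (Suc n) A \<sigma> else 0)"
  proof (rule sum.cong[OF refl])
    fix \<sigma> assume "\<sigma> \<in> ?F"
    then have sp: "\<sigma> permutes {..<2*Suc n}" and sm: "\<sigma> (2*n+1) = 2*n+1" by auto
    have "\<sigma> (2*n) < 2*Suc n" using permutes_in_image[OF sp] by simp
    moreover have "\<sigma> (2*n) \<noteq> \<sigma> (2*n+1)" using inj_eq[OF permutes_inj[OF sp]] by simp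
    ultimately have "\<sigma> (2*n) < 2*n+1" using sm by auto
    then show "Tpf (Suc n) A \<sigma> = (\<Sum>j<2*n+1. if \<sigma> (2*n) = j then Tpf (Suc n) A \<sigma> else 0)" by simp
  qed
  also have "\<dots> = (\<Sum>j<2*n+1. \<Sum>\<sigma>\<in>?F. if \<sigma> (2*n) = j then Tpf (Suc n) A \<sigma> else 0)" by (rule sum.swap)
  also have "\<dots> = (\<Sum>j<2*n+1. \<Sum>\<sigma> | \<sigma> permutes {..<2*Suc n} \<and> \<sigma> (2*n+1) = 2*n+1 \<and> \<sigma> (2*n) = j. Tpf (Suc n) A \<sigma>)"
  proof (rule sum.cong[OF refl])
    fix j
    have "{\<sigma>. \<sigma> permutes {..<2*Suc n} \<and> \<sigma> (2*n+1) = 2*n+1 \<and> \<sigma> (2*n) = j} = {\<sigma>\<in>?F. \<sigma> (2*n) = j}" by auto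
    then show "(\<Sum>\<sigma>\<in>?F. if \<sigma> (2*n) = j then Tpf (Suc n) A \<sigma> else 0) = (\<Sum>\<sigma> | \<sigma> permutes {..<2*Suc n} \<and> \<sigma> (2*n+1) = 2*n+1 \<and> \<sigma> (2*n) = j. Tpf (Suc n) A \<sigma>)"
      using sum.inter_filter[OF fin, of "Tpf (Suc n) A" "\<lambda>\<sigma>. \<sigma> (2*n) = j"] by simp
  qed
  also have "\<dots> = (\<Sum>j<2*n+1. (-1)^j * A j (2*n+1) * (\<Sum>\<rho> | \<rho> permutes {..<2*n}. Tpf n (\<lambda>a b. A (skipn j a) (skipn j b)) \<rho>))"
    by (intro sum.cong refl step2_j) simp
  finally show ?thesis by simp
qed

lemma div_lemma: "of_nat (2*Suc n) * (X::real) / (2^Suc n * fact (Suc n)) = X / (2^n * fact n)"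
proof -
  have "(2::real)^Suc n * fact (Suc n) = of_nat (2*Suc n) * (2^n * fact n)"
    by (simp add: fact_Suc)
  moreover have "of_nat (2*Suc n) \<noteq> (0::real)" by simp
  ultimately show ?thesis by (metis mult_divide_mult_cancel_left)
qed

lemma pfaffian_expand:
  assumes anti: "\<And>a b. A b a = - A a b"
  shows "pfaffian (Suc n) A = (\<Sum>j<2*n+1. (-1)^j * A j (2*n+1) * pfaffian n (\<lambda>a b. A (skipn j a) (skipn j b)))"
proof -
  have "pfaffian (Suc n) A = of_nat (2*Suc n) * (\<Sum>j<2*n+1. (-1)^j * A j (2*n+1) * (\<Sum>\<rho> | \<rho> permutes {..<2*n}. Tpf n (\<lambda>a b. A (skipn j a) (skipn j b)) \<rho>)) / (2 ^ Suc n * fact (Suc n))"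
    unfolding pfaffian_Tpf step1[OF anti] step2 by simp
  also have "\<dots> = (\<Sum>j<2*n+1. (-1)^j * A j (2*n+1) * (\<Sum>\<rho> | \<rho> permutes {..<2*n}. Tpf n (\<lambda>a b. A (skipn j a) (skipn j b)) \<rho>)) / (2 ^ n * fact n)"
    by (rule div_lemma)
  also have "\<dots> = (\<Sum>j<2*n+1. (-1)^j * A j (2*n+1) * pfaffian n (\<lambda>a b. A (skipn j a) (skipn j b)))"
    unfolding pfaffian_Tpf sum_divide_distrib[where A="{..<2*n+1}"] by (intro sum.cong refl) simp
  finally show ?thesis .
qed

lemma pf_one:
  assumes anti: "\<And>a b. A b a = - A a b"
  shows "pfaffian 1 A = A 0 1"
  using pfaffian_expand[OF anti, of 0] by (simp add: pfaffian_0)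

lemma sum_split2: "(\<Sum>j<2*(n::nat)+3. f j) = (\<Sum>j<2*n+1. f j) + f (2*n+1) + (f (2*n+2) :: real)"
proof -
  have "2*n+3 = Suc (Suc (2*n+1))" by simp
  then show ?thesis by (simp only: sum.lessThan_Suc) simp
qed

lemma sum_split1: "(\<Sum>j<2*(n::nat)+1. f j) = (\<Sum>j<2*n. f j) + (f (2*n) :: real)"
  by simp

lemma pf_penta:
  fixes g :: "nat \<Rightarrow> nat \<Rightarrow> real"
  assumes anti: "\<And>a b. g b a = - g a b" and band: "\<And>a b. a+3 \<le> b \<Longrightarrow> g a b = 0"
  shows "pfaffian (n+2) g = g (2*n+2) (2*n+3) * pfaffian (n+1) g - g (2*n+1) (2*n+3) * g (2*n) (2*n+2) * pfaffian n g"
proof -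
  define B where "B = (\<lambda>a b. g (skipn (2*n+1) a) (skipn (2*n+1) b))"
  have antiB: "\<And>a b. B b a = - B a b" unfolding B_def by (rule anti)
  have e3: "2*(n+1)+1 = 2*n+3" by simp
  have "pfaffian (Suc (n+1)) g = (\<Sum>j<2*n+3. (-1)^j * g j (2*n+3) * pfaffian (n+1) (\<lambda>a b. g (skipn j a) (skipn j b)))"
    using pfaffian_expand[OF anti, of "n+1"] unfolding e3 .
  also have "\<dots> = (\<Sum>j<2*n+1. (-1)^j * g j (2*n+3) * pfaffian (n+1) (\<lambda>a b. g (skipn j a) (skipn j b)))
     + (-1)^(2*n+1) * g (2*n+1) (2*n+3) * pfaffian (n+1) B
     + (-1)^(2*n+2) * g (2*n+2) (2*n+3) * pfaffian (n+1) (\<lambda>a b. g (skipn (2*n+2) a) (skipn (2*n+2) b))"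
    unfolding sum_split2 B_def by (rule refl)
  also have "(\<Sum>j<2*n+1. (-1)^j * g j (2*n+3) * pfaffian (n+1) (\<lambda>a b. g (skipn j a) (skipn j b))) = 0"
  proof (intro sum.neutral ballI)
    fix j assume "j \<in> {..<2*n+1}"
    then have "g j (2*n+3) = 0" by (intro band) simp
    then show "(-1)^j * g j (2*n+3) * pfaffian (n+1) (\<lambda>a b. g (skipn j a) (skipn j b)) = 0" by simp
  qed
  also have "pfaffian (n+1) (\<lambda>a b. g (skipn (2*n+2) a) (skipn (2*n+2) b)) = pfaffian (n+1) g"
    by (intro pfaffian_cong) (simp add: skipn_def)
  also have "pfaffian (n+1) B = g (2*n) (2*n+2) * pfaffian n g"
  proof -
    have "pfaffian (Suc n) B = (\<Sum>j<2*n+1. (-1)^j * B j (2*n+1) * pfaffian n (\<lambda>a b. B (skipn j a) (skipn j b)))"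
      by (rule pfaffian_expand[OF antiB])
    also have "\<dots> = (\<Sum>j<2*n. (-1)^j * B j (2*n+1) * pfaffian n (\<lambda>a b. B (skipn j a) (skipn j b)))
        + (-1)^(2*n) * B (2*n) (2*n+1) * pfaffian n (\<lambda>a b. B (skipn (2*n) a) (skipn (2*n) b))"
      by (rule sum_split1)
    also have "(\<Sum>j<2*n. (-1)^j * B j (2*n+1) * pfaffian n (\<lambda>a b. B (skipn j a) (skipn j b))) = 0"
    proof (intro sum.neutral ballI)
      fix j assume "j \<in> {..<2*n}"
      then have "B j (2*n+1) = 0" unfolding B_def skipn_def by (simp add: band)
      then show "(-1)^j * B j (2*n+1) * pfaffian n (\<lambda>a b. B (skipn j a) (skipn j b)) = 0" by simp
    qed
    also have "pfaffian n (\<lambda>a b. B (skipn (2*n) a) (skipn (2*n) b)) = pfaffian n g"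
      by (intro pfaffian_cong) (simp add: B_def skipn_def)
    also have "B (2*n) (2*n+1) = g (2*n) (2*n+2)" by (simp add: B_def skipn_def)
    finally show ?thesis by simp
  qed
  finally show ?thesis by (simp add: algebra_simps)
qed



lemma band_sum:
  fixes g :: "nat \<Rightarrow> nat \<Rightarrow> real"
  assumes band: "\<forall>a b. a+3 \<le> b \<longrightarrow> g a b = 0" and anti: "\<forall>a b. g b a = - g a b" and L: "i+2 \<le> L"
  shows "(\<Sum>a\<le>L. c a * g a i) = (\<Sum>a\<in>{i-2..i+2}. c a * g a i)"
proof (rule sum.mono_neutral_right)
  show "finite {..L}" by simp
  show "{i-2..i+2} \<subseteq> {..L}" using L by auto
  show "\<forall>a\<in>{..L} - {i-2..i+2}. c a * g a i = 0"
  proof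
    fix a assume "a \<in> {..L} - {i-2..i+2}"
    then have "a+3 \<le> i \<or> i+3 \<le> a" by auto
    then have "g a i = 0" using band anti by (metis add.inverse_neutral)
    then show "c a * g a i = 0" by simp
  qed
qed

lemma orth_alg:
  fixes g :: "nat \<Rightarrow> nat \<Rightarrow> real" and c w :: "nat \<Rightarrow> real"
  assumes band: "\<forall>a b. a+3 \<le> b \<longrightarrow> g a b = 0" and anti: "\<forall>a b. g b a = - g a b"
    and w1: "w 1 = g 0 1"
    and wrec: "\<forall>u. w (u+2) * w (u+1) = g (2*u+2) (2*u+3) * w (u+1) - g (2*u+1) (2*u+3) * g (2*u) (2*u+2)"
    and wnz: "\<forall>u. w (Suc u) \<noteq> 0"
    and R1: "\<forall>u<k. w (u+1) * c (2*u+1) = - g (2*u) (2*u+2) * c (2*u+2)"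
    and R2: "\<forall>u<k. w (u+1) * c (2*u) = g (2*u+1) (2*u+3) * c (2*u+3) + g (2*u+1) (2*u+2) * c (2*u+2)"
    and i: "i < 2*k"
  shows "(\<Sum>a\<le>2*k+1. c a * g a i) = 0"
proof -
  have ga: "g b a = - g a b" for a b using anti by blast
  have g0: "g a a = 0" for a using ga[of a a] by simp
  have red: "(\<Sum>a\<le>2*k+1. c a * g a i) = (\<Sum>a\<in>{i-2..i+2}. c a * g a i)"
    by (rule band_sum[OF band anti]) (use i in simp)
  consider "i = 0" | "i = 1" | t where "i = 2*t+2" | t where "i = 2*t+3"
  proof -
    have "i = 0 \<or> i = 1 \<or> (\<exists>t. i = 2*t+2) \<or> (\<exists>t. i = 2*t+3)" by presburger
    then show thesis using that by blast
  qed
  then show ?thesis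
  proof cases
    case 1
    have s: "{i-2..i+2} = {0,1,2}" using 1 by auto
    have r1: "w 1 * c 1 = - g 0 2 * c 2" using R1[rule_format, of 0] i 1 by (simp add: numeral_2_eq_2)
    have "g 1 0 = - g 0 1" "g 2 0 = - g 0 2" by (rule ga)+
    then show ?thesis unfolding red s using 1 r1 w1 g0
      by (simp add: algebra_simps)
  next
    case 2
    have s: "{i-2..i+2} = {0,1,2,3}" using 2 by auto
    have "0 < k" using 2 i by simp
    then have r2: "w 1 * c 0 = g 1 3 * c 3 + g 1 2 * c 2" using R2[rule_format, of 0] by (simp add: numeral_2_eq_2)
    have "g 2 1 = - g 1 2" "g 3 1 = - g 1 3" by (rule ga)+
    then show ?thesis unfolding red s using 2 r2 w1 g0
      by (simp add: algebra_simps)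
  next
    case 3
    have s: "{i-2..i+2} = {2*t, 2*t+1, 2*t+2, 2*t+3, 2*t+4}" using 3 by auto
    have tk: "t+1 < k" "t < k" using 3 i by auto
    have a1: "w (t+2) * c (2*t+3) = - g (2*t+2) (2*t+4) * c (2*t+4)" using R1[rule_format, of "t+1"] tk(1) by (simp add: eval_nat_numeral)
    have a2: "w (t+1) * c (2*t) = g (2*t+1) (2*t+3) * c (2*t+3) + g (2*t+1) (2*t+2) * c (2*t+2)"
      using R2[rule_format, of t] tk(2) by simp
    have a3: "w (t+1) * c (2*t+1) = - g (2*t) (2*t+2) * c (2*t+2)" using R1[rule_format, of t] tk(2) by simp
    have a4: "w (t+2) * w (t+1) = g (2*t+2) (2*t+3) * w (t+1) - g (2*t+1) (2*t+3) * g (2*t) (2*t+2)"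
      using wrec[rule_format, of t] by simp
    have n1: "g (2*t+3) (2*t+2) = - g (2*t+2) (2*t+3)" "g (2*t+4) (2*t+2) = - g (2*t+2) (2*t+4)"
      "g (2*t+2) (2*t+2) = 0" using ga g0 by blast+
    have sum5: "(\<Sum>a\<in>{2*t, 2*t+1, 2*t+2, 2*t+3, 2*t+4}. c a * g a i)
      = c (2*t) * g (2*t) (2*t+2) + c (2*t+1) * g (2*t+1) (2*t+2) + c (2*t+3) * g (2*t+3) (2*t+2) + c (2*t+4) * g (2*t+4) (2*t+2)"
      using 3 g0 by (simp add: algebra_simps)
    have id: "w (t+1) * (c (2*t) * g (2*t) (2*t+2) + c (2*t+1) * g (2*t+1) (2*t+2) + c (2*t+3) * (- g (2*t+2) (2*t+3)) + c (2*t+4) * (- g (2*t+2) (2*t+4)))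
      = g (2*t) (2*t+2) * (w (t+1) * c (2*t) - (g (2*t+1) (2*t+3) * c (2*t+3) + g (2*t+1) (2*t+2) * c (2*t+2)))
      + g (2*t+1) (2*t+2) * (w (t+1) * c (2*t+1) - (- g (2*t) (2*t+2) * c (2*t+2)))
      + c (2*t+3) * (w (t+2) * w (t+1) - (g (2*t+2) (2*t+3) * w (t+1) - g (2*t+1) (2*t+3) * g (2*t) (2*t+2)))
      - w (t+1) * (w (t+2) * c (2*t+3) - (- g (2*t+2) (2*t+4) * c (2*t+4)))"
      by (simp add: algebra_simps)
    have "w (t+1) * (\<Sum>a\<in>{i-2..i+2}. c a * g a i) = 0"
      unfolding s sum5 n1 id using a1 a2 a3 a4 by simp
    then show ?thesis using wnz red by (metis Suc_eq_plus1 mult_eq_0_iff)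
  next
    case 4
    have s: "{i-2..i+2} = {2*t+1, 2*t+2, 2*t+3, 2*t+4, 2*t+5}" using 4 by auto
    have tk: "t+1 < k" "t < k" using 4 i by auto
    have a1: "w (t+2) * c (2*t+2) = g (2*t+3) (2*t+5) * c (2*t+5) + g (2*t+3) (2*t+4) * c (2*t+4)"
      using R2[rule_format, of "t+1"] tk(1) by (simp add: eval_nat_numeral)
    have a3: "w (t+1) * c (2*t+1) = - g (2*t) (2*t+2) * c (2*t+2)" using R1[rule_format, of t] tk(2) by simp
    have a4: "w (t+2) * w (t+1) = g (2*t+2) (2*t+3) * w (t+1) - g (2*t+1) (2*t+3) * g (2*t) (2*t+2)"
      using wrec[rule_format, of t] by simp
    have n1: "g (2*t+4) (2*t+3) = - g (2*t+3) (2*t+4)" "g (2*t+5) (2*t+3) = - g (2*t+3) (2*t+5)"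
      by (rule ga)+
    have sum5: "(\<Sum>a\<in>{2*t+1, 2*t+2, 2*t+3, 2*t+4, 2*t+5}. c a * g a i)
      = c (2*t+1) * g (2*t+1) (2*t+3) + c (2*t+2) * g (2*t+2) (2*t+3) + c (2*t+4) * g (2*t+4) (2*t+3) + c (2*t+5) * g (2*t+5) (2*t+3)"
      using 4 g0 by (simp add: algebra_simps)
    have id: "w (t+1) * (c (2*t+1) * g (2*t+1) (2*t+3) + c (2*t+2) * g (2*t+2) (2*t+3) + c (2*t+4) * (- g (2*t+3) (2*t+4)) + c (2*t+5) * (- g (2*t+3) (2*t+5)))
      = g (2*t+1) (2*t+3) * (w (t+1) * c (2*t+1) - (- g (2*t) (2*t+2) * c (2*t+2)))
      - c (2*t+2) * (w (t+2) * w (t+1) - (g (2*t+2) (2*t+3) * w (t+1) - g (2*t+1) (2*t+3) * g (2*t) (2*t+2)))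
      + w (t+1) * (w (t+2) * c (2*t+2) - (g (2*t+3) (2*t+5) * c (2*t+5) + g (2*t+3) (2*t+4) * c (2*t+4)))"
      by (simp add: algebra_simps)
    have "w (t+1) * (\<Sum>a\<in>{i-2..i+2}. c a * g a i) = 0"
      unfolding s sum5 n1 id using a1 a3 a4 by simp
    then show ?thesis using wnz red by (metis Suc_eq_plus1 mult_eq_0_iff)
  qed
qed



lemma moment_cnj: "moment M k j = cnj (moment M j k)"
proof -
  have "(\<lambda>z. z^k * cnj z^j) = (\<lambda>z. cnj (z^j * cnj z^k))" by (auto simp: fun_eq_iff mult.commute)
  then have "moment M k j = (LINT z|M. cnj (z^j * cnj z^k))" unfolding moment_def by simp
  also have "\<dots> = cnj (moment M j k)" unfolding moment_def by (rule Bochner_Integration.integral_cnj)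
  finally show ?thesis .
qed

lemma mhat_sym: "mhat M k j = mhat M j k"
  unfolding mhat_def by (subst moment_cnj) simp

lemma gmat_anti: "gmat M b a = - gmat M a b"
  unfolding gmat_def using mhat_sym[of M "b+1" a] mhat_sym[of M b "a+1"] by simp

context
  fixes M :: "complex measure"
  assumes tridiag: "\<forall>j k. 2 \<le> \<bar>int j - int k\<bar> \<longrightarrow> moment M j k = 0"
begin

lemma mhat_zero: "2 \<le> \<bar>int j - int k\<bar> \<Longrightarrow> mhat M j k = 0"
  using tridiag unfolding mhat_def by simp

lemma gmat_band: "a+3 \<le> b \<Longrightarrow> gmat M a b = 0"
  unfolding gmat_def by (simp add: mhat_zero)

lemma gmat_h: "gmat M a (a+1) = 2 * mhat M (a+1) (a+1)"
  unfolding gmat_def by (simp add: mhat_zero)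

lemma gmat_e: "gmat M a (a+2) = 2 * mhat M (a+1) (a+2)"
  unfolding gmat_def by (simp add: mhat_zero)

end

lemma skew_anti: "skew M g f = - skew M f g"
proof -
  have "(\<lambda>z. (g z * cnj (f z) - f z * cnj (g z)) * (z - cnj z)) = (\<lambda>z. - ((f z * cnj (g z) - g z * cnj (f z)) * (z - cnj z)))"
    by (auto simp: fun_eq_iff algebra_simps)
  then show ?thesis unfolding skew_def by simp
qed

lemma skew_self: "skew M f f = 0"
  unfolding skew_def by simp

lemma skew_poly:
  assumes fm: "\<forall>j k. integrable M (\<lambda>z. z ^ j * cnj z ^ k)"
  shows "skew M (poly (\<Sum>a\<le>N. monom (complex_of_real (c a)) a)) (poly (\<Sum>b\<le>N'. monom (complex_of_real (d b)) b))
    = complex_of_real (\<Sum>a\<le>N. \<Sum>b\<le>N'. c a * d b * gmat M a b)"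
proof -
  define F where "F a b z = (z^a * cnj z^b - z^b * cnj z^a) * (z - cnj z)" for a b and z :: complex
  have Feq: "F a b = (\<lambda>z. z^(a+1) * cnj z^b - z^a * cnj z^(b+1) - z^(b+1) * cnj z^a + z^b * cnj z^(a+1))" for a b
    by (auto simp: F_def fun_eq_iff algebra_simps)
  have fi: "integrable M (\<lambda>z. z ^ j * cnj z ^ k)" for j k using fm by blast
  have Fint: "integrable M (F a b)" for a b unfolding Feq
    by (intro Bochner_Integration.integrable_add Bochner_Integration.integrable_diff fi)
  have Fval: "integral\<^sup>L M (F a b) = complex_of_real (gmat M a b)" for a b
  proof -
    have "integral\<^sup>L M (F a b) = moment M (a+1) b - moment M a (b+1) - moment M (b+1) a + moment M b (a+1)"
      unfolding Feq moment_def
      by (subst Bochner_Integration.integral_add Bochner_Integration.integral_diff, (intro Bochner_Integration.integrable_add Bochner_Integration.integrable_diff fi)+)+ simp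
    also have "\<dots> = (moment M (a+1) b + cnj (moment M (a+1) b)) - (moment M a (b+1) + cnj (moment M a (b+1)))"
      using moment_cnj[of M "b+1" a] moment_cnj[of M b "a+1"] by simp
    also have "\<dots> = complex_of_real (gmat M a b)"
      unfolding complex_add_cnj gmat_def mhat_def by simp
    finally show ?thesis .
  qed
  have pw: "(poly (\<Sum>a\<le>N. monom (complex_of_real (c a)) a) z * cnj (poly (\<Sum>b\<le>N'. monom (complex_of_real (d b)) b) z)
      - poly (\<Sum>b\<le>N'. monom (complex_of_real (d b)) b) z * cnj (poly (\<Sum>a\<le>N. monom (complex_of_real (c a)) a) z)) * (z - cnj z)
      = (\<Sum>a\<le>N. \<Sum>b\<le>N'. complex_of_real (c a * d b) * F a b z)" for z
  proof -
    let ?P = "\<Sum>a\<le>N. complex_of_real (c a) * z^a"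
    let ?Q = "\<Sum>b\<le>N'. complex_of_real (d b) * z^b"
    have "poly (\<Sum>a\<le>N. monom (complex_of_real (c a)) a) z = ?P" by (simp add: poly_sum poly_monom)
    moreover have "poly (\<Sum>b\<le>N'. monom (complex_of_real (d b)) b) z = ?Q" by (simp add: poly_sum poly_monom)
    moreover have "?P * cnj ?Q = (\<Sum>a\<le>N. \<Sum>b\<le>N'. complex_of_real (c a) * z^a * (complex_of_real (d b) * cnj z^b))"
      by (simp add: sum_product)
    moreover have "?Q * cnj ?P = (\<Sum>a\<le>N. \<Sum>b\<le>N'. complex_of_real (d b) * z^b * (complex_of_real (c a) * cnj z^a))"
      by (simp add: sum_product sum.swap[of _ "{..N'}"])
    ultimately have "(poly (\<Sum>a\<le>N. monom (complex_of_real (c a)) a) z * cnj (poly (\<Sum>b\<le>N'. monom (complex_of_real (d b)) b) z)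
      - poly (\<Sum>b\<le>N'. monom (complex_of_real (d b)) b) z * cnj (poly (\<Sum>a\<le>N. monom (complex_of_real (c a)) a) z)) * (z - cnj z)
      = (\<Sum>a\<le>N. \<Sum>b\<le>N'. (complex_of_real (c a) * z^a * (complex_of_real (d b) * cnj z^b)
            - complex_of_real (d b) * z^b * (complex_of_real (c a) * cnj z^a)) * (z - cnj z))"
      by (simp only: sum_subtractf[symmetric] sum_distrib_right)
    also have "\<dots> = (\<Sum>a\<le>N. \<Sum>b\<le>N'. complex_of_real (c a * d b) * F a b z)"
      by (intro sum.cong refl) (simp add: F_def algebra_simps)
    finally show ?thesis .
  qed
  have "skew M (poly (\<Sum>a\<le>N. monom (complex_of_real (c a)) a)) (poly (\<Sum>b\<le>N'. monom (complex_of_real (d b)) b))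
      = (LINT z|M. (\<Sum>a\<le>N. \<Sum>b\<le>N'. complex_of_real (c a * d b) * F a b z))"
    unfolding skew_def pw by simp
  also have "\<dots> = (\<Sum>a\<le>N. \<Sum>b\<le>N'. complex_of_real (c a * d b) * integral\<^sup>L M (F a b))"
    using Fint by (simp add: Bochner_Integration.integral_sum Bochner_Integration.integrable_sum)
  also have "\<dots> = complex_of_real (\<Sum>a\<le>N. \<Sum>b\<le>N'. c a * d b * gmat M a b)"
    by (simp add: Fval)
  finally show ?thesis .
qed


lemma sum_double_zero:
  fixes g :: "nat \<Rightarrow> nat \<Rightarrow> real"
  assumes anti: "\<And>a b. g b a = - g a b"
    and orth: "\<And>i. i < L \<Longrightarrow> (\<Sum>b\<le>N'. d b * g b i) = 0" and NL: "N < L"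
  shows "(\<Sum>a\<le>N. \<Sum>b\<le>N'. c a * d b * g a b) = 0"
proof -
  have "(\<Sum>a\<le>N. \<Sum>b\<le>N'. c a * d b * g a b) = (\<Sum>a\<le>N. - c a * (\<Sum>b\<le>N'. d b * g b a))"
  proof (intro sum.cong refl)
    fix a
    have "- c a * (\<Sum>b\<le>N'. d b * g b a) = (\<Sum>b\<le>N'. - c a * (d b * g b a))" by (simp add: sum_distrib_left)
    also have "\<dots> = (\<Sum>b\<le>N'. c a * d b * g a b)"
    proof (intro sum.cong refl)
      fix b show "- c a * (d b * g b a) = c a * d b * g a b" using anti[of a b] by simp
    qed
    finally show "(\<Sum>b\<le>N'. c a * d b * g a b) = - c a * (\<Sum>b\<le>N'. d b * g b a)" by simp
  qed
  also have "\<dots> = 0" using orth NL by (intro sum.neutral) auto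
  finally show ?thesis .
qed

theorem theorem4p1:
  fixes M :: "complex measure" and \<alpha> \<beta> :: "nat \<Rightarrow> nat \<Rightarrow> real"
    and q :: "nat \<Rightarrow> complex poly"
  assumes borel: "sets M = sets borel"
    and finite_moments: "\<forall>j k. integrable M (\<lambda>z. z ^ j * cnj z ^ k)"
    and tridiag: "\<forall>j k. 2 \<le> \<bar>int j - int k\<bar> \<longrightarrow> moment M j k = 0"
    and Delta_nz: "\<forall>k::nat. Delta M (int k) \<noteq> 0"
    and a_top: "\<forall>k. \<alpha> (2*k) (2*k) = 1"
    and a_conv: "\<forall>k. \<alpha> (2*k) (2*k+1) = 0"
    and b_top: "\<forall>k. \<beta> (2*k+1) (2*k+1) = 1"
    and b_zero1: "\<forall>k. \<beta> (2*k+1) (2*k) = 0"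
    and b_zero2: "\<forall>k\<ge>1. \<beta> (2*k+1) (2*k-1) = 0"
    and a_rec1: "\<forall>k j. 1 \<le> j \<and> j \<le> k \<longrightarrow>
       Zc M j * \<alpha> (2*k) (2*j-1) = - mhat M (2*j-1) (2*j) * \<alpha> (2*k) (2*j)"
    and a_rec2: "\<forall>k j. 1 \<le> j \<and> j \<le> k \<longrightarrow>
       Zc M j * \<alpha> (2*k) (2*j-2) = mhat M (2*j) (2*j+1) * \<alpha> (2*k) (2*j+1) + mhat M (2*j) (2*j) * \<alpha> (2*k) (2*j)"
    and b_rec1: "\<forall>k j. 1 \<le> j \<and> j \<le> k \<longrightarrow>
       Zc M j * \<beta> (2*k+1) (2*j-1) = - mhat M (2*j-1) (2*j) * \<beta> (2*k+1) (2*j)"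
    and b_rec2: "\<forall>k j. 1 \<le> j \<and> j \<le> k \<longrightarrow>
       Zc M j * \<beta> (2*k+1) (2*j-2) = mhat M (2*j) (2*j+1) * \<beta> (2*k+1) (2*j+1) + mhat M (2*j) (2*j) * \<beta> (2*k+1) (2*j)"
    and q_even: "\<forall>k. q (2*k) = (\<Sum>j\<le>2*k. monom (complex_of_real (\<alpha> (2*k) j)) j)"
    and q_odd: "\<forall>k. q (2*k+1) = (\<Sum>j\<le>2*k+1. monom (complex_of_real (\<beta> (2*k+1) j)) j)"
  shows "(\<forall>n. degree (q n) = n \<and> lead_coeff (q n) = 1)
    \<and> (\<forall>k l. skew M (poly (q (2*k))) (poly (q (2*l))) = 0)
    \<and> (\<forall>k l. skew M (poly (q (2*k+1))) (poly (q (2*l+1))) = 0)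
    \<and> (\<exists>r::nat \<Rightarrow> complex. \<forall>k l.
          skew M (poly (q (2*k))) (poly (q (2*l+1))) = (if k = l then r k else 0)
        \<and> skew M (poly (q (2*l+1))) (poly (q (2*k))) = - (if k = l then r k else 0))"
  proof -
  define g where "g = gmat M"
  define D where "D k = pfaffian k g" for k
  have anti: "\<And>a b. g b a = - g a b" unfolding g_def by (rule gmat_anti)
  have band: "\<And>a b. a+3 \<le> b \<Longrightarrow> g a b = 0" unfolding g_def using tridiag by (intro gmat_band)
  have gh: "\<And>a. g a (a+1) = 2 * mhat M (a+1) (a+1)" unfolding g_def using tridiag by (intro gmat_h)
  have ge: "\<And>a. g a (a+2) = 2 * mhat M (a+1) (a+2)" unfolding g_def using tridiag by (intro gmat_e)
  have D0: "D 0 = 1" unfolding D_def by (rule pfaffian_0)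
  have D1: "D 1 = g 0 1" unfolding D_def by (rule pf_one[OF anti])
  have Drec: "D (u+2) = g (2*u+2) (2*u+3) * D (u+1) - g (2*u+1) (2*u+3) * g (2*u) (2*u+2) * D u" for u
    unfolding D_def by (rule pf_penta[OF anti band])
  have DSuc: "Delta M (int u) = D (Suc u)" for u unfolding Delta_def D_def g_def by simp
  have Dnz: "D k \<noteq> 0" for k
  proof (cases k)
    case 0 then show ?thesis using D0 by simp
  next
    case (Suc u) then show ?thesis using Delta_nz DSuc by metis
  qed
  define w where "w j = D j / D (j - 1)" for j
  have Zw: "2 * Zc M (Suc u) = w (Suc u)" for u
  proof -
    have a: "Delta M (int (Suc u) - 1) = D (Suc u)" using DSuc[of u] by simp
    have b: "Delta M (int (Suc u) - 2) = D u"
    proof (cases u)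
      case 0 then show ?thesis using D0 by (simp add: Delta_def)
    next
      case (Suc v)
      then have "int (Suc u) - 2 = int v" by simp
      then show ?thesis using DSuc[of v] Suc by simp
    qed
    show ?thesis unfolding Zc_def w_def a b by simp
  qed
  have w1: "w 1 = g 0 1" unfolding w_def using D0 D1 by simp
  have wnz: "\<forall>u. w (Suc u) \<noteq> 0" unfolding w_def using Dnz by simp
  have wrec: "\<forall>u. w (u+2) * w (u+1) = g (2*u+2) (2*u+3) * w (u+1) - g (2*u+1) (2*u+3) * g (2*u) (2*u+2)"
  proof
    fix u
    have "w (u+2) * w (u+1) = D (u+2) / D u"
      unfolding w_def using Dnz[of "u+1"] by (simp add: eval_nat_numeral)
    also have "\<dots> = g (2*u+2) (2*u+3) * w (u+1) - g (2*u+1) (2*u+3) * g (2*u) (2*u+2)"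
      unfolding Drec w_def using Dnz[of u] by (simp add: field_simps)
    finally show "w (u+2) * w (u+1) = g (2*u+2) (2*u+3) * w (u+1) - g (2*u+1) (2*u+3) * g (2*u) (2*u+2)" .
  qed
  have e1: "2*(u+1) = 2*u+2" "2*u+2-1 = 2*u+1" "2*u+2-2 = 2*u" "2*u+2+1 = 2*u+3" for u :: nat by simp_all
  have conv1: "w (u+1) * c (2*u+1) = - g (2*u) (2*u+2) * c (2*u+2)"
    if "Zc M (u+1) * c (2*u+1) = - mhat M (2*u+1) (2*u+2) * c (2*u+2)" for u and c :: "nat \<Rightarrow> real"
  proof -
    have "w (u+1) * c (2*u+1) = 2 * (Zc M (u+1) * c (2*u+1))" using Zw[of u] by simp
    also have "\<dots> = - g (2*u) (2*u+2) * c (2*u+2)" unfolding that using ge[of "2*u"] by (simp add: eval_nat_numeral)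
    finally show ?thesis .
  qed
  have conv2: "w (u+1) * c (2*u) = g (2*u+1) (2*u+3) * c (2*u+3) + g (2*u+1) (2*u+2) * c (2*u+2)"
    if "Zc M (u+1) * c (2*u) = mhat M (2*u+2) (2*u+3) * c (2*u+3) + mhat M (2*u+2) (2*u+2) * c (2*u+2)" for u and c :: "nat \<Rightarrow> real"
  proof -
    have "w (u+1) * c (2*u) = 2 * (Zc M (u+1) * c (2*u))" using Zw[of u] by simp
    also have "\<dots> = g (2*u+1) (2*u+3) * c (2*u+3) + g (2*u+1) (2*u+2) * c (2*u+2)"
      unfolding that using ge[of "2*u+1"] gh[of "2*u+1"] by (simp add: eval_nat_numeral algebra_simps)
    finally show ?thesis .
  qed
  define cf where "cf n = (if even n then \<alpha> n else \<beta> n)" for n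
  have qcf: "q n = (\<Sum>a\<le>n. monom (complex_of_real (cf n a)) a)" for n
  proof (cases "even n")
    case True
    then obtain k where "n = 2*k" by blast
    then show ?thesis using q_even unfolding cf_def by simp
  next
    case False
    then obtain k where "n = 2*k+1" using oddE by blast
    then show ?thesis using q_odd unfolding cf_def by simp
  qed
  have cftop: "cf n n = 1" for n
  proof (cases "even n")
    case True
    then obtain k where "n = 2*k" by blast
    then show ?thesis using a_top unfolding cf_def by simp
  next
    case False
    then obtain k where "n = 2*k+1" using oddE by blast
    then show ?thesis using b_top unfolding cf_def by simp
  qed
  have orth: "(\<Sum>a\<le>n. cf n a * g a i) = 0" if "i < 2 * (n div 2)" for n i
  proof (cases "even n")
    case True
    then obtain k where n: "n = 2*k" by blast
    let ?c = "\<alpha> (2*k)"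
    have R1: "\<forall>u<k. w (u+1) * ?c (2*u+1) = - g (2*u) (2*u+2) * ?c (2*u+2)"
    proof (intro allI impI)
      fix u assume "u < k"
      then show "w (u+1) * ?c (2*u+1) = - g (2*u) (2*u+2) * ?c (2*u+2)"
        using a_rec1[rule_format, where k=k and j="u+1"] by (intro conv1) (simp only: e1, simp)
    qed
    have R2: "\<forall>u<k. w (u+1) * ?c (2*u) = g (2*u+1) (2*u+3) * ?c (2*u+3) + g (2*u+1) (2*u+2) * ?c (2*u+2)"
    proof (intro allI impI)
      fix u assume "u < k"
      then show "w (u+1) * ?c (2*u) = g (2*u+1) (2*u+3) * ?c (2*u+3) + g (2*u+1) (2*u+2) * ?c (2*u+2)"
        using a_rec2[rule_format, where k=k and j="u+1"] by (intro conv2) (simp only: e1, simp)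
    qed
    have "i < 2*k" using that n by simp
    then have "(\<Sum>a\<le>2*k+1. ?c a * g a i) = 0"
      using orth_alg[where g=g and w=w and c="?c" and k=k and i=i] band anti w1 wrec wnz R1 R2 by blast
    then show ?thesis using a_conv n unfolding cf_def by simp
  next
    case False
    then obtain k where n: "n = 2*k+1" using oddE by blast
    let ?c = "\<beta> (2*k+1)"
    have R1: "\<forall>u<k. w (u+1) * ?c (2*u+1) = - g (2*u) (2*u+2) * ?c (2*u+2)"
    proof (intro allI impI)
      fix u assume "u < k"
      then show "w (u+1) * ?c (2*u+1) = - g (2*u) (2*u+2) * ?c (2*u+2)"
        using b_rec1[rule_format, where k=k and j="u+1"] by (intro conv1) (simp only: e1, simp)
    qed
    have R2: "\<forall>u<k. w (u+1) * ?c (2*u) = g (2*u+1) (2*u+3) * ?c (2*u+3) + g (2*u+1) (2*u+2) * ?c (2*u+2)"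
    proof (intro allI impI)
      fix u assume "u < k"
      then show "w (u+1) * ?c (2*u) = g (2*u+1) (2*u+3) * ?c (2*u+3) + g (2*u+1) (2*u+2) * ?c (2*u+2)"
        using b_rec2[rule_format, where k=k and j="u+1"] by (intro conv2) (simp only: e1, simp)
    qed
    have "i < 2*k" using that n by simp
    then have "(\<Sum>a\<le>2*k+1. ?c a * g a i) = 0"
      using orth_alg[where g=g and w=w and c="?c" and k=k and i=i] band anti w1 wrec wnz R1 R2 by blast
    then show ?thesis using n unfolding cf_def by simp
  qed
  have skq: "skew M (poly (q n)) (poly (q m)) = complex_of_real (\<Sum>a\<le>n. \<Sum>b\<le>m. cf n a * cf m b * g a b)" for n m
    unfolding qcf g_def by (rule skew_poly[OF finite_moments])
  have low: "skew M (poly (q n)) (poly (q m)) = 0" if "n < 2 * (m div 2)" for n m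
    unfolding skq using sum_double_zero[OF anti orth that] by simp
  have low': "skew M (poly (q m)) (poly (q n)) = 0" if "n < 2 * (m div 2)" for n m
    using low[OF that] skew_anti[of M "poly (q m)" "poly (q n)"] by simp
  have deg: "degree (q n) = n \<and> lead_coeff (q n) = 1" for n
  proof -
    have co: "coeff (q n) i = (if i \<le> n then complex_of_real (cf n i) else 0)" for i
      unfolding qcf coeff_sum by simp
    have "degree (q n) \<le> n" by (rule degree_le) (simp add: co)
    moreover have "n \<le> degree (q n)" by (rule le_degree) (simp add: co cftop)
    ultimately have "degree (q n) = n" by simp
    then show ?thesis by (simp add: co cftop)
  qed
  have ee: "skew M (poly (q (2*k))) (poly (q (2*l))) = 0" for k l
  proof -
    consider "k < l" | "k = l" | "l < k" by linarith
    then show ?thesis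
    proof cases
      case 1 then show ?thesis by (intro low) simp
    next
      case 2 then show ?thesis by (simp add: skew_self)
    next
      case 3 then show ?thesis by (intro low') simp
    qed
  qed
  have oo: "skew M (poly (q (2*k+1))) (poly (q (2*l+1))) = 0" for k l
  proof -
    consider "k < l" | "k = l" | "l < k" by linarith
    then show ?thesis
    proof cases
      case 1 then show ?thesis by (intro low) simp
    next
      case 2 then show ?thesis by (simp add: skew_self)
    next
      case 3 then show ?thesis by (intro low') simp
    qed
  qed
  define r where "r k = skew M (poly (q (2*k))) (poly (q (2*k+1)))" for k
  have eo: "skew M (poly (q (2*k))) (poly (q (2*l+1))) = (if k = l then r k else 0)" for k l
  proof -
    consider "k < l" | "k = l" | "l < k" by linarith
    then show ?thesis
    proof cases
      case 1 then show ?thesis by simp (intro low, simp)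
    next
      case 2 then show ?thesis by (simp add: r_def)
    next
      case 3 then show ?thesis by simp (intro low', simp)
    qed
  qed
  have oe: "skew M (poly (q (2*l+1))) (poly (q (2*k))) = - (if k = l then r k else 0)" for k l
    using eo[of k l] skew_anti[of M "poly (q (2*l+1))" "poly (q (2*k))"] by simp
  show ?thesis using deg ee oo eo oe by blast
qed


end
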